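(* Let $X$ be a non-empty set, $\Lambda$ and $Y$ topological spaces, $y_0\in Y$. Let $\varphi\in\mathcal{G}$, $\Psi\in\mathcal{H}$ and $J\in\mathcal{M}$. Then, for each $\mu>\theta(\varphi,\Psi,J)$ and each filtering cover $\mathcal{N}$ of $X$, there exists $A\in\mathcal{N}$ such that $$\sup_{\lambda\in\Lambda}\inf_{x\in A}\big(J(x)-\mu\varphi(\Psi(x,\lambda))\big)<\inf_{x\in A}\sup_{z\in A}\big(J(x)-\mu\varphi(\Psi(x,\lambda_z))\big).$$
   Context: A family $\mathcal{N}$ of non-empty subsets of $X$ is a filtering cover of $X$ if $\bigcup_{A\in\mathcal{N}}A=X$ and for each $A_1,A_2\in\mathcal{N}$ there is $A_3\in\mathcal{N}$ with $A_1\cup A_2\subseteq A_3$. $\mathcal{G}$ is the family of all lower semicontinuous functions $\varphi:Y\to[0,+\infty[$ with $\varphi^{-1}(0)=\{y_0\}$ such that $\inf_{Y\setminus V}\varphi>0$ for each neighbourhood $V$ of $y_0$. $\mathcal{H}$ is the family of all functions $\Psi:X\times\Lambda\to Y$ such that, for each $x\in X$, $\Psi(x,\cdot)$ is continuous, injective, open, and takes the value $y_0$ at a point $\lambda_x$ (necessarily unique), and the function $x\mapsto\lambda_x$ is not constant. $\mathcal{M}$ is the family of all functions $J:X\to\mathbb{R}$ whose set $M_J$ of global minima is non-empty. For $\varphi\in\mathcal{G}$, $\Psi\in\mathcal{H}$, $J\in\mathcal{M}$, $$\theta(\varphi,\Psi,J)=\inf\left\{\frac{J(x)-J(u)}{\varphi(\Psi(x,\lambda_u))}:(u,x)\in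 M_J\times X,\ \lambda_x\neq\lambda_u\right\}.$$ *)

theory Defs
  imports "HOL-Analysis.Analysis"
begin

definition lsc :: "('y::topological_space \<Rightarrow> real) \<Rightarrow> bool" where
  "lsc \<phi> \<longleftrightarrow> (\<forall>t. open {y. t < \<phi> y})"

definition filtering_cover :: "'a set \<Rightarrow> 'a set set \<Rightarrow> bool" where
  "filtering_cover X N \<longleftrightarrow>
     (\<forall>A\<in>N. A \<noteq> {} \<and> A \<subseteq> X) \<and> \<Union>N = X \<and>
     (\<forall>A1\<in>N. \<forall>A2\<in>N. \<exists>A3\<in>N. A1 \<union> A2 \<subseteq> A3)"

definition is_nhd :: "'y::topological_space set \<Rightarrow> 'y \<Rightarrow> bool" where
  "is_nhd V y \<longleftrightarrow> (\<exists>U. open U \<and> y \<in> U \<and> U \<subseteq> V)"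

text \<open>The family G (depends on y0). The infimum over an empty set is +infinity,
  so "inf > 0" is expressed via extended reals.\<close>
definition classG :: "'y::topological_space \<Rightarrow> ('y \<Rightarrow> real) set" where
  "classG y0 = {\<phi>. lsc \<phi> \<and> (\<forall>y. 0 \<le> \<phi> y) \<and> {y. \<phi> y = 0} = {y0} \<and>
     (\<forall>V. is_nhd V y0 \<longrightarrow> (INF y\<in>UNIV - V. ereal (\<phi> y)) > 0)}"

definition open_map_on :: "('l::topological_space \<Rightarrow> 'y::topological_space) \<Rightarrow> bool" where
  "open_map_on f \<longleftrightarrow> (\<forall>U. open U \<longrightarrow> open (f ` U))"

definition lam :: "('a \<Rightarrow> 'l \<Rightarrow> 'y) \<Rightarrow> 'y \<Rightarrow> 'a \<Rightarrow> 'l" where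
  "lam \<Psi> y0 x = (THE l. \<Psi> x l = y0)"

definition classH :: "'a set \<Rightarrow> 'y::topological_space \<Rightarrow> ('a \<Rightarrow> 'l::topological_space \<Rightarrow> 'y) set" where
  "classH X y0 = {\<Psi>. (\<forall>x\<in>X. continuous_on UNIV (\<Psi> x) \<and> inj (\<Psi> x) \<and> open_map_on (\<Psi> x)
       \<and> (\<exists>l. \<Psi> x l = y0)) \<and> \<not> (\<exists>c. \<forall>x\<in>X. lam \<Psi> y0 x = c)}"

definition minset :: "'a set \<Rightarrow> ('a \<Rightarrow> real) \<Rightarrow> 'a set" where
  "minset X J = {u\<in>X. \<forall>x\<in>X. J u \<le> J x}"

definition classM :: "'a set \<Rightarrow> ('a \<Rightarrow> real) set" where
  "classM X = {J. minset X J \<noteq> {}}"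

definition theta :: "'a set \<Rightarrow> 'y \<Rightarrow> ('y \<Rightarrow> real) \<Rightarrow> ('a \<Rightarrow> 'l \<Rightarrow> 'y) \<Rightarrow> ('a \<Rightarrow> real) \<Rightarrow> ereal" where
  "theta X y0 \<phi> \<Psi> J = (INF p\<in>{(u,x). u \<in> minset X J \<and> x \<in> X \<and> lam \<Psi> y0 x \<noteq> lam \<Psi> y0 u}.
      ereal ((J (snd p) - J (fst p)) / \<phi> (\<Psi> (snd p) (lam \<Psi> y0 (fst p)))))"

end

theory Submission
  imports Defs
begin

theorem theorem3p1:
  fixes X :: "'a set" and y0 :: "'y::topological_space"
    and \<phi> :: "'y \<Rightarrow> real" and \<Psi> :: "'a \<Rightarrow> 'l::topological_space \<Rightarrow> 'y"
    and J :: "'a \<Rightarrow> real" and \<mu> :: real and N :: "'a set set"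
  assumes "X \<noteq> {}"
    and "\<phi> \<in> classG y0" and "\<Psi> \<in> classH X y0" and "J \<in> classM X"
    and "ereal \<mu> > theta X y0 \<phi> \<Psi> J"
    and "filtering_cover X N"
  shows "\<exists>A\<in>N. (SUP l. INF x\<in>A. ereal (J x - \<mu> * \<phi> (\<Psi> x l)))
               < (INF x\<in>A. SUP z\<in>A. ereal (J x - \<mu> * \<phi> (\<Psi> x (lam \<Psi> y0 z))))"
proof -
  have G: "lsc \<phi>" "\<And>y. 0 \<le> \<phi> y" "{y. \<phi> y = 0} = {y0}"
    "\<And>V. is_nhd V y0 \<Longrightarrow> (INF y\<in>UNIV - V. ereal (\<phi> y)) > 0"
    using assms(2) unfolding classG_def by auto
  have phi0: "\<And>y. \<phi> y = 0 \<longleftrightarrow> y = y0" using G(3) by auto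
  have H: "\<And>x. x \<in> X \<Longrightarrow> continuous_on UNIV (\<Psi> x) \<and> inj (\<Psi> x) \<and> open_map_on (\<Psi> x)
       \<and> (\<exists>l. \<Psi> x l = y0)"
    using assms(3) unfolding classH_def by auto
  have lam1: "\<Psi> x (lam \<Psi> y0 x) = y0" if "x \<in> X" for x
  proof -
    have "\<exists>!l. \<Psi> x l = y0" using H[OF that] by (metis injD)
    then show ?thesis unfolding lam_def by (rule theI')
  qed
  have lam2: "l = lam \<Psi> y0 x" if "x \<in> X" "\<Psi> x l = y0" for x l
    using lam1[OF that(1)] that H[OF that(1)] by (metis injD)
  obtain p where p: "p \<in> {(u,x). u \<in> minset X J \<and> x \<in> X \<and> lam \<Psi> y0 x \<noteq> lam \<Psi> y0 u}"
    "ereal ((J (snd p) - J (fst p)) / \<phi> (\<Psi> (snd p) (lam \<Psi> y0 (fst p)))) < ereal \<mu>"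
    using assms(5) unfolding theta_def by (auto simp: INF_less_iff)
  obtain u xs where uxs: "p = (u, xs)" by (cases p)
  define lu where "lu = lam \<Psi> y0 u"
  have uM: "u \<in> X" "\<And>x. x \<in> X \<Longrightarrow> J u \<le> J x" using p(1) uxs unfolding minset_def by auto
  have xsX: "xs \<in> X" and neq: "lam \<Psi> y0 xs \<noteq> lu" using p(1) uxs lu_def by auto
  define a where "a = \<phi> (\<Psi> xs lu)"
  have "\<Psi> xs lu \<noteq> y0" using lam2[OF xsX] neq by metis
  hence apos: "a > 0" using G(2) phi0 a_def by (metis less_eq_real_def)
  have lt: "(J xs - J u) / a < \<mu>" using p(2) uxs a_def lu_def by simp
  hence lt2: "J xs - J u < \<mu> * a" using apos by (simp add: divide_less_eq mult.commute)
  have "0 < \<mu> * a" using lt2 uM(2)[OF xsX] by linarith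
  hence mupos: "\<mu> > 0" using apos zero_less_mult_pos2 by blast
  define t where "t = ((J xs - J u)/\<mu> + a)/2"
  have q: "(J xs - J u)/\<mu> < a" using lt2 mupos by (simp add: divide_less_eq mult.commute)
  have avg: "\<And>b c::real. b < c \<Longrightarrow> b < (b+c)/2 \<and> (b+c)/2 < c" by argo
  have t1: "(J xs - J u)/\<mu> < t" and t2: "t < a" using avg[OF q] unfolding t_def by auto
  define U where "U = \<Psi> xs -` {y. t < \<phi> y}"
  have "open (UNIV \<inter> \<Psi> xs -` {y. t < \<phi> y})"
  proof -
    have c: "continuous_on UNIV (\<Psi> xs)" using H[OF xsX] by blast
    have o: "open {y. t < \<phi> y}" using G(1) unfolding lsc_def by blast
    have "\<forall>B. open B \<longrightarrow> open (\<Psi> xs -` B)" using c continuous_on_open_vimage[of UNIV "\<Psi> xs"] by simp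
    hence "open (\<Psi> xs -` {y. t < \<phi> y})" using o by blast
    thus ?thesis by simp
  qed
  hence openU: "open U" unfolding U_def by simp
  have luU: "lu \<in> U" using t2 a_def U_def by simp
  define V where "V = \<Psi> u ` U"
  have "open V" using H[OF uM(1)] openU unfolding V_def open_map_on_def by blast
  moreover have "y0 \<in> V" unfolding V_def using luU lam1[OF uM(1)] lu_def by (metis image_eqI)
  ultimately have "is_nhd V y0" unfolding is_nhd_def by blast
  hence "(INF y\<in>UNIV - V. ereal (\<phi> y)) > 0" using G(4) by blast
  then obtain \<delta> where d: "0 < ereal \<delta>" "ereal \<delta> < (INF y\<in>UNIV - V. ereal (\<phi> y))"
    using ereal_dense2 by blast
  have dpos: "\<delta> > 0" using d(1) by simp
  have outU: "\<phi> (\<Psi> u l) \<ge> \<delta>" if "l \<notin> U" for l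
  proof -
    have "\<Psi> u l \<notin> V" using that H[OF uM(1)] unfolding V_def by (auto dest: injD)
    hence "(INF y\<in>UNIV - V. ereal (\<phi> y)) \<le> ereal (\<phi> (\<Psi> u l))" by (intro INF_lower) auto
    hence "ereal \<delta> \<le> ereal (\<phi> (\<Psi> u l))" using d(2) by (meson less_imp_le order_trans)
    thus ?thesis by simp
  qed
  define e1 where "e1 = J u - (J xs - \<mu> * t)"
  have e1pos: "e1 > 0" using t1 mupos by (simp add: e1_def field_simps)
  define m where "m = min e1 (\<mu> * \<delta>)"
  have mpos: "m > 0" using e1pos mupos dpos by (simp add: m_def)
  obtain A1 A2 where A12: "A1 \<in> N" "u \<in> A1" "A2 \<in> N" "xs \<in> A2"
    using assms(6) uM(1) xsX unfolding filtering_cover_def by blast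
  then obtain A where A: "A \<in> N" "u \<in> A" "xs \<in> A" "A \<subseteq> X"
    using assms(6) unfolding filtering_cover_def by (metis Un_subset_iff subsetD)
  have L: "(SUP l. INF x\<in>A. ereal (J x - \<mu> * \<phi> (\<Psi> x l))) \<le> ereal (J u - m)"
  proof (rule SUP_least)
    fix l
    show "(INF x\<in>A. ereal (J x - \<mu> * \<phi> (\<Psi> x l))) \<le> ereal (J u - m)"
    proof (cases "l \<in> U")
      case True
      hence "t < \<phi> (\<Psi> xs l)" using U_def by simp
      hence "\<mu> * t < \<mu> * \<phi> (\<Psi> xs l)" using mupos by simp
      hence "J xs - \<mu> * \<phi> (\<Psi> xs l) \<le> J u - m" using m_def e1_def by linarith
      moreover have "(INF x\<in>A. ereal (J x - \<mu> * \<phi> (\<Psi> x l))) \<le> ereal (J xs - \<mu> * \<phi> (\<Psi> xs l))"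
        using A(3) by (rule INF_lower)
      ultimately show ?thesis by (meson ereal_less_eq(3) order_trans)
    next
      case False
      hence "\<mu> * \<delta> \<le> \<mu> * \<phi> (\<Psi> u l)" using outU mupos by simp
      hence "J u - \<mu> * \<phi> (\<Psi> u l) \<le> J u - m" using m_def by linarith
      moreover have "(INF x\<in>A. ereal (J x - \<mu> * \<phi> (\<Psi> x l))) \<le> ereal (J u - \<mu> * \<phi> (\<Psi> u l))"
        using A(2) by (rule INF_lower)
      ultimately show ?thesis by (meson ereal_less_eq(3) order_trans)
    qed
  qed
  have R: "ereal (J u) \<le> (INF x\<in>A. SUP z\<in>A. ereal (J x - \<mu> * \<phi> (\<Psi> x (lam \<Psi> y0 z))))"
  proof (rule INF_greatest)
    fix x assume x: "x \<in> A"
    have s1: "ereal (J x - \<mu> * \<phi> (\<Psi> x (lam \<Psi> y0 x))) \<le> (SUP z\<in>A. ereal (J x - \<mu> * \<phi> (\<Psi> x (lam \<Psi> y0 z))))"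
      using x by (rule SUP_upper)
    have s2: "\<phi> (\<Psi> x (lam \<Psi> y0 x)) = 0" using lam1 x A(4) phi0 by auto
    show "ereal (J u) \<le> (SUP z\<in>A. ereal (J x - \<mu> * \<phi> (\<Psi> x (lam \<Psi> y0 z))))"
    proof -
      have "J u \<le> J x" using uM(2) x A(4) by blast
      hence "ereal (J u) \<le> ereal (J x)" by simp
      thus ?thesis using s1 s2 by (metis diff_zero mult_zero_right order_trans)
    qed
  qed
  have "ereal (J u - m) < ereal (J u)" using mpos by simp
  thus ?thesis using L R A(1) by (meson order_le_less_trans order_less_le_trans)
qed

end
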